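(* Let $d\ge1$, $\alpha\in(0,1)$, $\sigma_+,\sigma_->0$, and let $\mathcal{D}$ be the distribution on $\mathbb{R}^d\times\{\pm1\}$ with $y=+1$ with probability $\alpha$ and $y=-1$ with probability $1-\alpha$, where $\boldsymbol{x}\sim\mathcal{N}(\boldsymbol{1},\sigma_+^2 I)$ if $y=+1$ and $\boldsymbol{x}\sim\mathcal{N}(-\boldsymbol{1},\sigma_-^2 I)$ if $y=-1$, with $\boldsymbol{1}=(1,\dots,1)\in\mathbb{R}^d$. Let $f^*(\boldsymbol{x})=\mathrm{sign}(\langle\boldsymbol{w^*},\boldsymbol{x}\rangle+b^* )$ be the linear model minimizing the misclassification risk $R(f)=\alpha\,\mathbb{P}(f(\boldsymbol{x})=-1\mid y=+1)+(1-\alpha)\,\mathbb{P}(f(\boldsymbol{x})=+1\mid y=-1)$ on $\mathcal{D}$. If $\sigma_+>\sigma_-$ and $\frac{\alpha\sigma_-}{(1-\alpha)\sigma_+}>1$, then $S_{P,+1}(f^* )>S_{P,-1}(f^* )$.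
   Context: Fix $\sigma_P>0$ and let $\boldsymbol{\epsilon}_w\sim\mathcal{N}(\boldsymbol{0},\sigma_P^2 I_d)$ and $\epsilon_b\sim\mathcal{N}(0,\sigma_P^2)$ be independent parameter-level noise. The parameter smoothness (evaluated at the class centers $\pm\boldsymbol{1}$) of $f(\boldsymbol{x})=\mathrm{sign}(\langle\boldsymbol{w},\boldsymbol{x}\rangle+b)$ is $S_{P,+1}(f)=\mathbb{P}(\langle\boldsymbol{w}+\boldsymbol{\epsilon}_w,\boldsymbol{1}\rangle+b+\epsilon_b>0)$ for class $+1$ and $S_{P,-1}(f)=\mathbb{P}(\langle\boldsymbol{w}+\boldsymbol{\epsilon}_w,-\boldsymbol{1}\rangle+b+\epsilon_b<0)$ for class $-1$. *)

theory Defs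
  imports "HOL-Probability.Probability"
begin

definition ones :: "real ^ 'n" where
  "ones = (\<chi> i. 1)"

definition gauss_iso :: "real ^ 'n \<Rightarrow> real \<Rightarrow> (real ^ 'n) measure" where
  "gauss_iso mu s =
     density lborel (\<lambda>x. ennreal (\<Prod>i\<in>UNIV. normal_density (mu $ i) s (x $ i)))"

text \<open>Linear model f(x) = sign(<w,x> + b), with the convention that f(x) = +1 iff
  <w,x> + b > 0 and f(x) = -1 otherwise.\<close>
definition risk :: "real \<Rightarrow> real \<Rightarrow> real \<Rightarrow> real ^ 'n \<Rightarrow> real \<Rightarrow> real" where
  "risk alpha sp sm w b =
     alpha * measure (gauss_iso ones sp) {x. w \<bullet> x + b \<le> 0}
     + (1 - alpha) * measure (gauss_iso (- ones) sm) {x. w \<bullet> x + b > 0}"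

definition param_noise :: "real \<Rightarrow> ((real ^ 'n) \<times> real) measure" where
  "param_noise sP = gauss_iso 0 sP \<Otimes>\<^sub>M density lborel (normal_density 0 sP)"

definition S_plus :: "real \<Rightarrow> real ^ 'n \<Rightarrow> real \<Rightarrow> real" where
  "S_plus sP w b = measure (param_noise sP) {(ew, eb). (w + ew) \<bullet> ones + b + eb > 0}"

definition S_minus :: "real \<Rightarrow> real ^ 'n \<Rightarrow> real \<Rightarrow> real" where
  "S_minus sP w b = measure (param_noise sP) {(ew, eb). (w + ew) \<bullet> (- ones) + b + eb < 0}"

end

theory Submission
  imports Defs "HOL-Analysis.Analysis"
begin


abbreviation NN :: "real \<Rightarrow> real \<Rightarrow> real measure" where
  "NN m s \<equiv> density lborel (normal_density m s)"

lemma NN_prob: "0 < s \<Longrightarrow> prob_space (NN m s)"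
  by (rule prob_space_normal_density)

lemma NN_emeasure: "A \<in> sets borel \<Longrightarrow> emeasure (NN m s) A = (\<integral>\<^sup>+x. ennreal (normal_density m s x) * indicator A x \<partial>lborel)"
  by (simp add: emeasure_density)

lemma NN_tail_shift:
  "measure (NN m s) {y. a < y} = measure (NN 0 s) {y. a - m < y}"
proof -
  have "emeasure (NN m s) {y. a < y} = (\<integral>\<^sup>+x. ennreal (normal_density m s x) * indicator {y. a < y} x \<partial>lborel)"
    by (simp add: NN_emeasure)
  also have "\<dots> = (\<integral>\<^sup>+x. ennreal (normal_density m s (m + 1 * x)) * indicator {y. a < y} (m + 1 * x) \<partial>lborel)"
    by (subst nn_integral_real_affine[where c=1 and t=m]) auto
  also have "\<dots> = (\<integral>\<^sup>+x. ennreal (normal_density 0 s x) * indicator {y. a - m < y} x \<partial>lborel)"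
    by (intro nn_integral_cong) (auto simp: normal_density_def indicator_def)
  also have "\<dots> = emeasure (NN 0 s) {y. a - m < y}"
    by (simp add: NN_emeasure)
  finally show ?thesis by (simp add: measure_def)
qed

lemma NN_sym:
  "measure (NN 0 s) {y. y < t} = measure (NN 0 s) {y. - t < y}"
proof -
  have "emeasure (NN 0 s) {y. y < t} = (\<integral>\<^sup>+x. ennreal (normal_density 0 s x) * indicator {y. y < t} x \<partial>lborel)"
    by (simp add: NN_emeasure)
  also have "\<dots> = (\<integral>\<^sup>+x. ennreal (normal_density 0 s (0 + -1 * x)) * indicator {y. y < t} (0 + -1 * x) \<partial>lborel)"
    by (subst nn_integral_real_affine[where c="-1" and t=0]) auto
  also have "\<dots> = (\<integral>\<^sup>+x. ennreal (normal_density 0 s x) * indicator {y. - t < y} x \<partial>lborel)"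
    by (intro nn_integral_cong) (auto simp: normal_density_def indicator_def)
  also have "\<dots> = emeasure (NN 0 s) {y. - t < y}"
    by (simp add: NN_emeasure)
  finally show ?thesis by (simp add: measure_def)
qed

lemma density_pos_measure:
  fixes g :: "real \<Rightarrow> real"
  assumes [measurable]: "g \<in> borel_measurable borel" and gpos: "\<And>x. x \<in> A \<Longrightarrow> 0 < g x"
    and A[measurable]: "A \<in> sets borel" and Apos: "emeasure lborel A > 0"
  shows "emeasure (density lborel g) A > 0"
proof (rule ccontr)
  assume "\<not> ?thesis"
  then have "emeasure (density lborel g) A = 0" by (simp add: not_less)
  then have "(\<integral>\<^sup>+x. ennreal (g x) * indicator A x \<partial>lborel) = 0"
    by (simp add: emeasure_density)
  then have "AE x in lborel. ennreal (g x) * indicator A x = 0"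
    by (subst (asm) nn_integral_0_iff_AE) auto
  then have "AE x in lborel. x \<notin> A"
    by eventually_elim (use gpos in \<open>fastforce simp: indicator_def split: if_splits\<close>)
  then have "emeasure lborel A = 0"
    by (subst (asm) AE_iff_measurable[where N=A]) auto
  with Apos show False by simp
qed

lemma NN_slab_pos:
  assumes "0 < s" "c < d"
  shows "measure (NN m s) {c<..d} > 0"
proof -
  have "emeasure (NN m s) {c<..d} > 0"
    using assms by (intro density_pos_measure) (auto simp: normal_density_pos)
  moreover have "emeasure (NN m s) {c<..d} = ennreal (measure (NN m s) {c<..d})"
    using finite_measure.emeasure_eq_measure[OF prob_space.finite_measure[OF NN_prob[OF assms(1)]]] by blast
  ultimately show ?thesis by simp
qed

lemma NN_tail_split:
  assumes "0 < s" "c \<le> d"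
  shows "measure (NN m s) {y. c < y} = measure (NN m s) {y. d < y} + measure (NN m s) {c<..d}"
proof -
  interpret prob_space "NN m s" by (rule NN_prob) fact
  have "{y. c < y} = {y. d < y} \<union> {c<..d}" using assms by auto
  moreover have "measure (NN m s) ({y. d < y} \<union> {c<..d}) = measure (NN m s) {y. d < y} + measure (NN m s) {c<..d}"
    by (intro finite_measure_Union) auto
  ultimately show ?thesis by simp
qed

lemma NN_tail_strict:
  assumes "0 < s" "c < d"
  shows "measure (NN m s) {y. d < y} < measure (NN m s) {y. c < y}"
  using NN_tail_split[of s c d m] NN_slab_pos[OF assms, of m] assms by simp

lemma NN_tail_mean_strict:
  assumes "0 < s" "m1 < m2"
  shows "measure (NN m1 s) {y. a < y} < measure (NN m2 s) {y. a < y}"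
  using NN_tail_strict[OF assms(1), of "a - m2" "a - m1" 0] assms
  by (simp add: NN_tail_shift[of m1] NN_tail_shift[of m2])

lemma NN_compl:
  assumes "0 < s" shows "measure (NN m s) {y. y \<le> a} = 1 - measure (NN m s) {y. a < y}"
proof -
  interpret prob_space "NN m s" by (rule NN_prob) fact
  have "{y. y \<le> a} = space (NN m s) - {y. a < y}" by auto
  moreover have "{y. a < y} \<in> events" by simp
  ultimately show ?thesis using prob_compl[of "{y. a < y}"] by simp
qed



lemma prod_Basis_cart:
  "(\<Prod>b\<in>(Basis :: (real^'n) set). F b) = (\<Prod>i\<in>UNIV. F (axis i 1))"
  by (simp add: Basis_vec_def UNION_singleton_eq_range prod.reindex axis_eq_axis inj_on_def)

lemma indicator_box_cart:
  fixes l u :: "real^'n"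
  shows "(indicator (box l u) x :: ennreal) = (\<Prod>i\<in>UNIV. indicator {l$i<..<u$i} (x$i))"
proof (cases "x \<in> box l u")
  case True
  then show ?thesis by (auto simp: mem_box_cart indicator_def)
next
  case False
  then obtain i where "\<not> (l$i < x$i \<and> x$i < u$i)" by (auto simp: mem_box_cart)
  then have "(\<Prod>i\<in>UNIV. (indicator {l$i<..<u$i} (x$i) :: ennreal)) = 0"
    by (subst ennreal_prod_eq_0) (auto simp: indicator_def intro!: bexI[of _ i])
  with False show ?thesis by simp
qed

lemma measurable_vec_lambda_PiM:
  assumes "\<And>i. sets (M i) = sets borel"
  shows "(\<lambda>f. \<chi> i. f i) \<in> measurable (PiM UNIV (\<lambda>i. M i)) (borel :: (real^'n) measure)"
proof (subst borel_measurable_euclidean_space, intro ballI)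
  fix b :: "real^'n" assume "b \<in> Basis"
  then obtain j where b: "b = axis j 1" by (auto simp: Basis_vec_def)
  have "(\<lambda>f. f j) \<in> measurable (PiM UNIV (\<lambda>i. M i)) (M j)"
    by (rule measurable_component_singleton) simp
  then have "(\<lambda>f. f j) \<in> borel_measurable (PiM UNIV (\<lambda>i. M i))"
    using assms measurable_cong_sets by blast
  then show "(\<lambda>x. (\<chi> i. x i) \<bullet> b) \<in> borel_measurable (PiM UNIV M)"
    by (simp add: b cart_eq_inner_axis[symmetric])
qed

lemma gauss_iso_eq_distr:
  fixes mu :: "real^'n"
  assumes s: "0 < s"
  shows "gauss_iso mu s = distr (PiM UNIV (\<lambda>i. NN (mu$i) s)) borel (\<lambda>f. \<chi> i. f i)"
    (is "_ = distr ?P borel ?T")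
proof -
  interpret P: product_prob_space "\<lambda>i. NN (mu$i) s" UNIV
    unfolding product_prob_space_def product_prob_space_axioms_def product_sigma_finite_def
    using NN_prob[OF s] by (auto intro: prob_space_imp_sigma_finite)
  interpret Pf: finite_product_sigma_finite "\<lambda>i. NN (mu$i) s" UNIV
    by standard simp
  have T[measurable]: "?T \<in> measurable ?P borel" by (rule measurable_vec_lambda_PiM) simp
  have eqbox: "emeasure (gauss_iso mu s) (box l u) = emeasure (distr ?P borel ?T) (box l u)" for l u :: "real^'n"
  proof -
    define f where "f b t = ennreal (normal_density (mu \<bullet> b) s t) * indicator {l\<bullet>b<..<u\<bullet>b} t" for b :: "real^'n" and t :: real
    have "emeasure (gauss_iso mu s) (box l u) =
        (\<integral>\<^sup>+x. ennreal (\<Prod>i\<in>UNIV. normal_density (mu $ i) s (x $ i)) * indicator (box l u) x \<partial>lborel)"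
      unfolding gauss_iso_def by (subst emeasure_density) auto
    also have "\<dots> = (\<integral>\<^sup>+x. (\<Prod>b\<in>Basis. f b (x \<bullet> b)) \<partial>lborel)"
    proof (intro nn_integral_cong)
      fix x :: "real^'n"
      have "(\<Prod>b\<in>Basis. f b (x \<bullet> b)) = (\<Prod>i\<in>UNIV. ennreal (normal_density (mu $ i) s (x $ i)) * indicator {l$i<..<u$i} (x$i))"
        by (simp add: prod_Basis_cart f_def cart_eq_inner_axis)
      also have "\<dots> = ennreal (\<Prod>i\<in>UNIV. normal_density (mu $ i) s (x $ i)) * indicator (box l u) x"
        by (simp add: prod.distrib indicator_box_cart prod_ennreal)
      finally show "ennreal (\<Prod>i\<in>UNIV. normal_density (mu $ i) s (x $ i)) * indicator (box l u) x = (\<Prod>b\<in>Basis. f b (x \<bullet> b))" by simp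
    qed
    also have "\<dots> = (\<Prod>b\<in>Basis. (\<integral>\<^sup>+t. f b t \<partial>lborel))"
      by (rule nn_integral_lborel_prod) (auto simp: f_def)
    also have "\<dots> = (\<Prod>i\<in>UNIV. emeasure (NN (mu$i) s) {l$i<..<u$i})"
      by (simp add: prod_Basis_cart f_def cart_eq_inner_axis emeasure_density)
    also have "\<dots> = emeasure ?P (Pi\<^sub>E UNIV (\<lambda>i. {l$i<..<u$i}))"
      by (subst Pf.measure_times) auto
    also have "Pi\<^sub>E UNIV (\<lambda>i. {l$i<..<u$i}) = ?T -` box l u \<inter> space ?P"
      by (auto simp: space_PiM mem_box_cart PiE_def Pi_def extensional_def)
    also have "emeasure ?P \<dots> = emeasure (distr ?P borel ?T) (box l u)"
      by (subst emeasure_distr) auto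
    finally show ?thesis .
  qed
  interpret D: prob_space "distr ?P borel ?T"
    by (intro P.prob_space_distr T)
  show ?thesis
  proof (rule measure_eqI_generator_eq[where E="range (\<lambda>(a, b). box a b)" and \<Omega>=UNIV])
    show "Int_stable (range (\<lambda>(a, b). box a b :: (real^'n) set))"
      by (auto simp: Int_stable_def box_Int_box)
    show "range (\<lambda>(a, b). box a b :: (real^'n) set) \<subseteq> Pow UNIV" by auto
    show "sets (gauss_iso mu s) = sigma_sets UNIV (range (\<lambda>(a, b). box a b))"
      unfolding gauss_iso_def by (simp add: borel_eq_box)
    show "sets (distr ?P borel ?T) = sigma_sets UNIV (range (\<lambda>(a, b). box a b))"
      by (simp add: borel_eq_box)
    let ?A = "\<lambda>n::nat. box (- (real n *\<^sub>R One)) (real n *\<^sub>R One) :: (real^'n) set"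
    show "range ?A \<subseteq> range (\<lambda>(a, b). box a b)" "(\<Union>i. ?A i) = UNIV"
      unfolding UN_box_eq_UNIV by auto
    show "emeasure (gauss_iso mu s) (?A i) \<noteq> \<infinity>" for i
      using eqbox D.emeasure_finite by simp
    show "emeasure (gauss_iso mu s) X = emeasure (distr ?P borel ?T) X" if "X \<in> range (\<lambda>(a, b). box a b)" for X
      using that eqbox by auto
  qed
qed



lemma inner_vec_sum: "(w::real^'n) \<bullet> x = (\<Sum>i\<in>UNIV. w$i * x$i)"
  by (simp add: inner_vec_def)

lemma gauss_lin:
  fixes mu w :: "real^'n"
  assumes s: "0 < s" and w: "w \<noteq> 0"
  shows "distr (gauss_iso mu s) borel (\<lambda>x. w \<bullet> x) = NN (w \<bullet> mu) (s * norm w)"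
proof -
  let ?P = "PiM UNIV (\<lambda>i. NN (mu$i) s)"
  let ?T = "\<lambda>f. \<chi> i. f i :: real^'n"
  interpret P: product_prob_space "\<lambda>i. NN (mu$i) s" UNIV
    unfolding product_prob_space_def product_prob_space_axioms_def product_sigma_finite_def
    using NN_prob[OF s] by (auto intro: prob_space_imp_sigma_finite)
  have Pprob: "prob_space ?P"
    by (rule P.prob_space_P) auto
  have T[measurable]: "?T \<in> measurable ?P borel" by (rule measurable_vec_lambda_PiM) simp
  have comp: "(\<lambda>f. f i) \<in> measurable ?P borel" for i
    using measurable_component_singleton[of i UNIV "\<lambda>i. NN (mu$i) s"] measurable_cong_sets by fastforce
  have distr_i: "distr ?P borel (\<lambda>f. f i) = NN (mu$i) s" for i
  proof -
    have "distr ?P borel (\<lambda>f. f i) = distr ?P (NN (mu$i) s) (\<lambda>f. f i)"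
      by (rule distr_cong) auto
    also have "\<dots> = NN (mu$i) s"
      by (rule distr_PiM_component) (auto intro: NN_prob[OF s])
    finally show ?thesis .
  qed
  have indep: "prob_space.indep_vars ?P (\<lambda>i. borel) (\<lambda>i f. f i) UNIV"
  proof (subst prob_space.indep_vars_iff_distr_eq_PiM[OF Pprob])
    show "distr ?P (PiM UNIV (\<lambda>i. borel)) (\<lambda>x. \<lambda>i\<in>UNIV. x i) = PiM UNIV (\<lambda>i. distr ?P borel (\<lambda>f. f i))"
    proof -
      have "distr ?P (PiM UNIV (\<lambda>i. borel)) (\<lambda>x. \<lambda>i\<in>UNIV. x i) = distr ?P ?P (\<lambda>x. x)"
        by (rule distr_cong) (auto intro!: sets_PiM_cong simp: space_PiM)
      also have "\<dots> = ?P" by simp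
      also have "\<dots> = PiM UNIV (\<lambda>i. distr ?P borel (\<lambda>f. f i))"
        by (simp add: distr_i)
      finally show ?thesis .
    qed
  qed (auto intro: comp)
  let ?I = "{i. w$i \<noteq> 0}"
  have Ine: "?I \<noteq> {}" using w by (auto simp: vec_eq_iff)
  have indep2: "prob_space.indep_vars ?P (\<lambda>i. borel) (\<lambda>i f. w$i * f i) ?I"
    using prob_space.indep_vars_compose2[OF Pprob indep, where Y="\<lambda>i x. w$i * x" and N="\<lambda>i. borel"]
    by (auto intro: prob_space.indep_vars_subset[OF Pprob])
  have distI: "distributed ?P lborel (\<lambda>f. f i) (normal_density (mu$i) s)" for i
    unfolding distributed_def
  proof (intro conjI)
    show "distr ?P lborel (\<lambda>f. f i) = NN (mu$i) s"
      using distr_i[of i] by (metis distr_cong sets_lborel)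
    show "(\<lambda>f. f i) \<in> measurable ?P lborel" using comp measurable_cong_sets by fastforce
  qed simp
  have distW: "distributed ?P lborel (\<lambda>f. w$i * f i) (normal_density (w$i * mu$i) (\<bar>w$i\<bar> * s))" if "i \<in> ?I" for i
    using prob_space.normal_density_affine[OF Pprob distI[of i] s, where \<alpha>="w$i" and \<beta>=0] that by simp
  have sumd: "distributed ?P lborel (\<lambda>f. \<Sum>i\<in>?I. w$i * f i)
      (normal_density (\<Sum>i\<in>?I. w$i * mu$i) (sqrt (\<Sum>i\<in>?I. (\<bar>w$i\<bar> * s)\<^sup>2)))"
    by (rule prob_space.sum_indep_normal[OF Pprob _ Ine indep2]) (use s distW in auto)
  have e1: "(\<Sum>i\<in>?I. w$i * f i) = w \<bullet> ?T f" for f :: "'n \<Rightarrow> real"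
    by (simp add: inner_vec_sum) (rule sum.mono_neutral_left, auto)
  have e2: "(\<Sum>i\<in>?I. w$i * mu$i) = w \<bullet> mu"
    by (simp add: inner_vec_sum) (rule sum.mono_neutral_left, auto)
  have e3: "sqrt (\<Sum>i\<in>?I. (\<bar>w$i\<bar> * s)\<^sup>2) = s * norm w"
  proof -
    have "(\<Sum>i\<in>?I. (\<bar>w$i\<bar> * s)\<^sup>2) = s\<^sup>2 * (\<Sum>i\<in>UNIV. (w$i)\<^sup>2)"
      by (simp add: power_mult_distrib sum_distrib_left mult.commute) (rule sum.mono_neutral_left, auto)
    then show ?thesis
      using s by (simp add: norm_vec_def L2_set_def real_sqrt_mult)
  qed
  have "distr (gauss_iso mu s) borel (\<lambda>x. w \<bullet> x) = distr (distr ?P borel ?T) borel (\<lambda>x. w \<bullet> x)"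
    by (simp add: gauss_iso_eq_distr[OF s])
  also have "\<dots> = distr ?P borel (\<lambda>f. w \<bullet> ?T f)"
    by (subst distr_distr) (auto simp: comp_def)
  also have "\<dots> = distr ?P lborel (\<lambda>f. \<Sum>i\<in>?I. w$i * f i)"
    by (rule distr_cong) (auto simp: e1)
  also have "\<dots> = NN (w \<bullet> mu) (s * norm w)"
    using sumd unfolding distributed_def e2 e3 by simp
  finally show ?thesis .
qed



lemma gauss_prob:
  fixes mu :: "real^'n"
  assumes s: "0 < s" shows "prob_space (gauss_iso mu s)"
proof -
  interpret P: product_prob_space "\<lambda>i. NN (mu$i) s" UNIV
    unfolding product_prob_space_def product_prob_space_axioms_def product_sigma_finite_def
    using NN_prob[OF s] by (auto intro: prob_space_imp_sigma_finite)
  have Pprob: "prob_space (PiM UNIV (\<lambda>i. NN (mu$i) s))"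
    by (rule P.prob_space_P) auto
  have T: "(\<lambda>f. \<chi> i. f i :: real^'n) \<in> measurable (PiM UNIV (\<lambda>i. NN (mu$i) s)) borel"
    by (rule measurable_vec_lambda_PiM) simp
  show ?thesis
    unfolding gauss_iso_eq_distr[OF s] by (rule prob_space.prob_space_distr[OF Pprob T])
qed

lemma space_gauss[simp]: "space (gauss_iso mu s) = UNIV"
  by (simp add: gauss_iso_def)

lemma sets_gauss[simp]: "sets (gauss_iso mu s) = sets borel"
  by (simp add: gauss_iso_def)

lemma gauss_lin_measure:
  fixes mu w :: "real^'n"
  assumes s: "0 < s" and w: "w \<noteq> 0" and A: "A \<in> sets borel"
  shows "measure (gauss_iso mu s) {x. w \<bullet> x \<in> A} = measure (NN (w \<bullet> mu) (s * norm w)) A"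
proof -
  have "measure (NN (w \<bullet> mu) (s * norm w)) A = measure (distr (gauss_iso mu s) borel (\<lambda>x. w \<bullet> x)) A"
    by (simp add: gauss_lin[OF s w])
  also have "\<dots> = measure (gauss_iso mu s) ((\<lambda>x. w \<bullet> x) -` A \<inter> space (gauss_iso mu s))"
    by (rule measure_distr) (auto simp: A measurable_cong_sets[OF sets_gauss refl])
  finally show ?thesis by (simp add: vimage_def)
qed

definition TT :: "real \<Rightarrow> real \<Rightarrow> real \<Rightarrow> real" where
  "TT m s a = measure (NN m s) {y. a < y}"

lemma risk_repr:
  fixes w :: "real^'n"
  assumes "0 < sp" "0 < sm" "w \<noteq> 0"
  shows "risk alpha sp sm w b =
    alpha * (1 - TT (w \<bullet> ones) (sp * norm w) (- b)) + (1 - alpha) * TT (- (w \<bullet> ones)) (sm * norm w) (- b)"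
proof -
  have "measure (gauss_iso ones sp) {x. w \<bullet> x + b \<le> 0} = measure (gauss_iso ones sp) {x. w \<bullet> x \<in> {y. y \<le> - b}}"
    by (rule arg_cong[where f="measure _"]) auto
  also have "\<dots> = measure (NN (w \<bullet> ones) (sp * norm w)) {y. y \<le> - b}"
    by (rule gauss_lin_measure) (use assms in auto)
  also have "\<dots> = 1 - TT (w \<bullet> ones) (sp * norm w) (- b)"
    unfolding TT_def by (rule NN_compl) (use assms in auto)
  finally have 1: "measure (gauss_iso ones sp) {x. w \<bullet> x + b \<le> 0} = 1 - TT (w \<bullet> ones) (sp * norm w) (- b)" .
  have "measure (gauss_iso (- ones) sm) {x. w \<bullet> x + b > 0} = measure (gauss_iso (- ones) sm) {x. w \<bullet> x \<in> {y. - b < y}}"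
    by (rule arg_cong[where f="measure _"]) auto
  also have "\<dots> = measure (NN (w \<bullet> (- ones)) (sm * norm w)) {y. - b < y}"
    by (rule gauss_lin_measure) (use assms in auto)
  also have "\<dots> = TT (- (w \<bullet> ones)) (sm * norm w) (- b)"
    unfolding TT_def by simp
  finally have 2: "measure (gauss_iso (- ones) sm) {x. w \<bullet> x + b > 0} = TT (- (w \<bullet> ones)) (sm * norm w) (- b)" .
  show ?thesis unfolding risk_def 1 2 ..
qed

lemma risk_zero:
  assumes "0 < sp" "0 < sm"
  shows "risk alpha sp sm (0 :: real^'n) b = (if b \<le> 0 then alpha else 1 - alpha)"
proof -
  interpret Gp: prob_space "gauss_iso (ones :: real^'n) sp" by (rule gauss_prob) fact
  interpret Gm: prob_space "gauss_iso (- ones :: real^'n) sm" by (rule gauss_prob) fact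
  show ?thesis
  proof (cases "b \<le> 0")
    case True
    then have "{x::real^'n. 0 \<bullet> x + b \<le> 0} = space (gauss_iso ones sp)" "{x::real^'n. 0 \<bullet> x + b > 0} = {}" by auto
    moreover have "measure (gauss_iso (ones :: real^'n) sp) UNIV = 1" using Gp.prob_space by simp
    ultimately show ?thesis using True unfolding risk_def by simp
  next
    case False
    then have "{x::real^'n. 0 \<bullet> x + b \<le> 0} = {}" "{x::real^'n. 0 \<bullet> x + b > 0} = space (gauss_iso (- ones) sm)" by auto
    moreover have "measure (gauss_iso (- ones :: real^'n) sm) UNIV = 1" using Gm.prob_space by simp
    ultimately show ?thesis using False unfolding risk_def by simp
  qed
qed



lemma NN_compare:
  assumes s1: "0 < s1" and s2: "0 < s2" and cd: "c < d" and k1: "0 \<le> k1" and k2: "0 \<le> k2"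
    and pt: "\<And>y. c < y \<Longrightarrow> y \<le> d \<Longrightarrow> k2 * normal_density m2 s2 y < k1 * normal_density m1 s1 y"
  shows "k2 * measure (NN m2 s2) {c<..d} < k1 * measure (NN m1 s1) {c<..d}"
proof -
  have eq: "ennreal (k * measure (NN m s) {c<..d}) = (\<integral>\<^sup>+y. ennreal (k * normal_density m s y) * indicator {c<..d} y \<partial>lborel)"
    if "0 \<le> k" "0 < s" for k m s
  proof -
    interpret prob_space "NN m s" by (rule NN_prob) fact
    have "ennreal (k * measure (NN m s) {c<..d}) = ennreal k * emeasure (NN m s) {c<..d}"
      using that by (simp add: emeasure_eq_measure ennreal_mult)
    also have "\<dots> = ennreal k * (\<integral>\<^sup>+y. ennreal (normal_density m s y) * indicator {c<..d} y \<partial>lborel)"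
      by (simp add: emeasure_density)
    also have "\<dots> = (\<integral>\<^sup>+y. ennreal k * (ennreal (normal_density m s y) * indicator {c<..d} y) \<partial>lborel)"
      by (rule nn_integral_cmult[symmetric]) simp
    also have "\<dots> = (\<integral>\<^sup>+y. ennreal (k * normal_density m s y) * indicator {c<..d} y \<partial>lborel)"
      using that by (intro nn_integral_cong) (simp add: ennreal_mult mult.assoc)
    finally show ?thesis .
  qed
  have "(\<integral>\<^sup>+y. ennreal (k2 * normal_density m2 s2 y) * indicator {c<..d} y \<partial>lborel)
      < (\<integral>\<^sup>+y. ennreal (k1 * normal_density m1 s1 y) * indicator {c<..d} y \<partial>lborel)"
  proof (rule nn_integral_less)
    show "(\<integral>\<^sup>+y. ennreal (k2 * normal_density m2 s2 y) * indicator {c<..d} y \<partial>lborel) \<noteq> \<infinity>"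
      using eq[OF k2 s2, symmetric] by simp
    show "AE x in lborel. ennreal (k2 * normal_density m2 s2 x) * indicator {c<..d} x
        \<le> ennreal (k1 * normal_density m1 s1 x) * indicator {c<..d} x"
    proof (intro AE_I2)
      fix x
      show "ennreal (k2 * normal_density m2 s2 x) * indicator {c<..d} x
        \<le> ennreal (k1 * normal_density m1 s1 x) * indicator {c<..d} x"
        using pt[of x] by (cases "c < x \<and> x \<le> d") (auto simp: indicator_def intro!: ennreal_leI)
    qed
    show "\<not> (AE x in lborel. ennreal (k1 * normal_density m1 s1 x) * indicator {c<..d} x
        \<le> ennreal (k2 * normal_density m2 s2 x) * indicator {c<..d} x)"
    proof
      assume "AE x in lborel. ennreal (k1 * normal_density m1 s1 x) * indicator {c<..d} x
        \<le> ennreal (k2 * normal_density m2 s2 x) * indicator {c<..d} x"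
      then have "AE x in lborel. x \<notin> {c<..d}"
      proof eventually_elim
        fix x assume h: "ennreal (k1 * normal_density m1 s1 x) * indicator {c<..d} x
          \<le> ennreal (k2 * normal_density m2 s2 x) * indicator {c<..d} x"
        show "x \<notin> {c<..d}"
        proof
          assume x: "x \<in> {c<..d}"
          then have "ennreal (k1 * normal_density m1 s1 x) \<le> ennreal (k2 * normal_density m2 s2 x)"
            using h by simp
          moreover have "k2 * normal_density m2 s2 x < k1 * normal_density m1 s1 x" using pt x by auto
          ultimately show False
            using k2 by (simp add: ennreal_le_iff2 ennreal_le_iff) (smt (verit) ennreal_le_iff k1 mult_nonneg_nonneg normal_density_nonneg)
        qed
      qed
      then have "emeasure lborel {c<..d} = 0"
        by (subst (asm) AE_iff_measurable[where N="{c<..d}"]) auto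
      with cd show False by simp
    qed
  qed simp_all
  then have "ennreal (k2 * measure (NN m2 s2) {c<..d}) < ennreal (k1 * measure (NN m1 s1) {c<..d})"
    using eq[OF k1 s1] eq[OF k2 s2] by simp
  then show ?thesis using k2 by (simp add: ennreal_less_iff)
qed

lemma pointwise_bound:
  fixes alpha sp sm u s1 y :: real
  assumes a: "0 < alpha" "alpha < 1" and sm: "0 < sm" "sm < sp" and u: "0 < u" and s1: "0 \<le> s1"
    and r: "1 < r" and rdef: "r = alpha * sm / ((1 - alpha) * sp)"
    and y: "- (ln r * sp\<^sup>2 * u\<^sup>2 / (4 * (s1 + 1))) < y"
  shows "(1 - alpha) * normal_density (- s1) (sm * u) y < alpha * normal_density s1 (sp * u) y"
proof -
  have sp: "0 < sp" using sm by simp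
  define A where "A = (y - s1)\<^sup>2 / (2 * (sp * u)\<^sup>2)"
  define B where "B = (y - - s1)\<^sup>2 / (2 * (sm * u)\<^sup>2)"
  have lr: "0 < ln r" using r by simp
  have le: "2 * (sm * u)\<^sup>2 \<le> 2 * (sp * u)\<^sup>2"
    using sm u by (auto intro!: power_mono mult_right_mono)
  have B1: "(y + s1)\<^sup>2 / (2 * (sp * u)\<^sup>2) \<le> B"
    unfolding B_def using sm u sp le
    by (simp add: divide_left_mono)
  have "(y + s1)\<^sup>2 / (2 * (sp * u)\<^sup>2) - A = 2 * (y * s1) / (sp\<^sup>2 * u\<^sup>2)"
    unfolding A_def using sp u by (simp add: field_simps power2_eq_square)
  moreover have "y * s1 \<ge> - (ln r * sp\<^sup>2 * u\<^sup>2 / (4 * (s1 + 1))) * s1"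
    using y s1 by (intro mult_right_mono) auto
  moreover have "2 * (- (ln r * sp\<^sup>2 * u\<^sup>2 / (4 * (s1 + 1))) * s1) / (sp\<^sup>2 * u\<^sup>2) = - ln r * (s1 / (2 * (s1 + 1)))"
  proof -
    have q: "0 < s1 + 1" using s1 by simp
    have "2 * (- (ln r * sp\<^sup>2 * u\<^sup>2 / (4 * (s1 + 1))) * s1) / (sp\<^sup>2 * u\<^sup>2)
       = (2 * (- ln r * s1)) * (sp\<^sup>2 * u\<^sup>2) / ((2 * (2 * (s1 + 1))) * (sp\<^sup>2 * u\<^sup>2))"
      by (simp add: algebra_simps)
    also have "\<dots> = (2 * (- ln r * s1)) / (2 * (2 * (s1 + 1)))"
      by (rule nonzero_mult_divide_mult_cancel_right) (use sp u in simp)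
    also have "\<dots> = (- ln r * s1) / (2 * (s1 + 1))"
      by (rule nonzero_mult_divide_mult_cancel_left) simp
    also have "\<dots> = - ln r * (s1 / (2 * (s1 + 1)))"
      by simp
    finally show ?thesis by simp
  qed
  moreover have "s1 / (2 * (s1 + 1)) < 1" using s1 by simp
  moreover have "2 * (y * s1) / (sp\<^sup>2 * u\<^sup>2) \<ge> 2 * (- (ln r * sp\<^sup>2 * u\<^sup>2 / (4 * (s1 + 1))) * s1) / (sp\<^sup>2 * u\<^sup>2)"
    using sp u calculation(2) by (intro divide_right_mono) auto
  moreover have "ln r * (s1 / (2 * (s1 + 1))) < ln r * 1"
    using lr calculation(4) by (intro mult_strict_left_mono) auto
  ultimately have "- ln r < B - A"
    using B1 by linarith
  then have ex: "exp (- B) < exp (ln r - A)" by simp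
  have nd1: "normal_density (- s1) (sm * u) y = 1 / (sqrt (2 * pi) * (sm * u)) * exp (- B)"
    unfolding normal_density_def B_def using sm u
    by (simp add: real_sqrt_mult)
  have nd2: "normal_density s1 (sp * u) y = 1 / (sqrt (2 * pi) * (sp * u)) * exp (- A)"
    unfolding normal_density_def A_def using sp u
    by (simp add: real_sqrt_mult)
  have "exp (ln r - A) = exp (ln r) * exp (- A)" by (simp add: exp_add[symmetric])
  then have "exp (ln r - A) = r * exp (- A)" using r by simp
  have c0: "0 < (1 - alpha) / (sqrt (2 * pi) * (sm * u))" using a sm u by simp
  have "(1 - alpha) * normal_density (- s1) (sm * u) y = (1 - alpha) / (sqrt (2 * pi) * (sm * u)) * exp (- B)"
    by (simp add: nd1)
  also have "\<dots> < (1 - alpha) / (sqrt (2 * pi) * (sm * u)) * (r * exp (- A))"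
    using ex \<open>exp (ln r - A) = r * exp (- A)\<close> c0 by (intro mult_strict_left_mono) auto
  also have "\<dots> = alpha * normal_density s1 (sp * u) y"
    unfolding nd2 rdef using a sm u by (simp add: field_simps)
  finally show ?thesis .
qed



lemma S_compare:
  fixes w :: "real^'n"
  assumes sP: "0 < sP" and b: "0 < b"
  shows "S_minus sP w b < S_plus sP w b"
proof -
  let ?G = "gauss_iso (0::real^'n) sP"
  let ?N = "NN 0 sP"
  interpret G: prob_space ?G by (rule gauss_prob) fact
  interpret N: prob_space ?N by (rule NN_prob) fact
  have PSp: "prob_space (?G \<Otimes>\<^sub>M ?N)" by (rule prob_space_pair) unfold_locales
  interpret PS: prob_space "?G \<Otimes>\<^sub>M ?N" by (rule PSp)
  define Ap where "Ap = {(ew, eb). (w + ew) \<bullet> ones + b + eb > (0::real)}"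
  define Am where "Am = {(ew, eb). (w + ew) \<bullet> (- ones) + b + eb < (0::real)}"
  have sets_eq: "sets (?G \<Otimes>\<^sub>M ?N) = sets ((borel :: (real^'n) measure) \<Otimes>\<^sub>M (borel :: real measure))"
    by (intro sets_pair_measure_cong) auto
  have Ap_sets: "Ap \<in> sets (?G \<Otimes>\<^sub>M ?N)"
  proof -
    have "{x \<in> space ((borel :: (real^'n) measure) \<Otimes>\<^sub>M (borel :: real measure)). (w + fst x) \<bullet> ones + b + snd x > 0} \<in> sets (borel \<Otimes>\<^sub>M borel)"
      by measurable
    moreover have "{x \<in> space ((borel :: (real^'n) measure) \<Otimes>\<^sub>M (borel :: real measure)). (w + fst x) \<bullet> ones + b + snd x > 0} = Ap"
      by (auto simp: Ap_def space_pair_measure)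
    ultimately show ?thesis using sets_eq by simp
  qed
  have Am_sets: "Am \<in> sets (?G \<Otimes>\<^sub>M ?N)"
  proof -
    have h1: "{x \<in> space ((borel :: (real^'n) measure) \<Otimes>\<^sub>M (borel :: real measure)). (w + fst x) \<bullet> (- ones) + b + snd x < 0} \<in> sets (borel \<Otimes>\<^sub>M borel)"
      by measurable
    have h2: "{x \<in> space ((borel :: (real^'n) measure) \<Otimes>\<^sub>M (borel :: real measure)). (w + fst x) \<bullet> (- ones) + b + snd x < 0} = Am"
      by (auto simp: Am_def space_pair_measure)
    show ?thesis by (subst sets_eq) (subst h2[symmetric], rule h1)
  qed
  have sliceP: "emeasure ?N (Pair ew -` Ap) = ennreal (TT 0 sP (- (w \<bullet> ones + ew \<bullet> ones + b)))" for ew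
  proof -
    have "Pair ew -` Ap = {eb. - (w \<bullet> ones + ew \<bullet> ones + b) < eb}"
      by (auto simp: Ap_def inner_add_left)
    then show ?thesis by (simp add: TT_def N.emeasure_eq_measure)
  qed
  have sliceM: "emeasure ?N (Pair ew -` Am) = ennreal (TT 0 sP (- (w \<bullet> ones + ew \<bullet> ones - b)))" for ew
  proof -
    have "Pair ew -` Am = {eb. eb < w \<bullet> ones + ew \<bullet> ones - b}"
      by (auto simp: Am_def inner_add_left)
    then show ?thesis by (simp add: TT_def N.emeasure_eq_measure NN_sym)
  qed
  have pt: "TT 0 sP (- (w \<bullet> ones + ew \<bullet> ones - b)) < TT 0 sP (- (w \<bullet> ones + ew \<bullet> ones + b))" for ew
    unfolding TT_def by (rule NN_tail_strict) (use sP b in auto)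
  have "(\<integral>\<^sup>+ew. emeasure ?N (Pair ew -` Am) \<partial>?G) < (\<integral>\<^sup>+ew. emeasure ?N (Pair ew -` Ap) \<partial>?G)"
  proof (rule nn_integral_less)
    show "(\<lambda>ew. emeasure ?N (Pair ew -` Am)) \<in> borel_measurable ?G"
      by (rule N.measurable_emeasure_Pair[OF Am_sets])
    show "(\<lambda>ew. emeasure ?N (Pair ew -` Ap)) \<in> borel_measurable ?G"
      by (rule N.measurable_emeasure_Pair[OF Ap_sets])
    show "(\<integral>\<^sup>+ew. emeasure ?N (Pair ew -` Am) \<partial>?G) \<noteq> \<infinity>"
      using N.emeasure_pair_measure_alt[OF Am_sets] PS.emeasure_finite[of Am] by simp
    show "AE x in ?G. emeasure ?N (Pair x -` Am) \<le> emeasure ?N (Pair x -` Ap)"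
      unfolding sliceP sliceM by (intro AE_I2 ennreal_leI less_imp_le pt)
    show "\<not> (AE x in ?G. emeasure ?N (Pair x -` Ap) \<le> emeasure ?N (Pair x -` Am))"
    proof
      assume "AE x in ?G. emeasure ?N (Pair x -` Ap) \<le> emeasure ?N (Pair x -` Am)"
      then have "AE x in ?G. False"
      proof eventually_elim
        fix x assume "emeasure ?N (Pair x -` Ap) \<le> emeasure ?N (Pair x -` Am)"
        then have "TT 0 sP (- (w \<bullet> ones + x \<bullet> ones + b)) \<le> TT 0 sP (- (w \<bullet> ones + x \<bullet> ones - b))"
          by (simp add: sliceP sliceM TT_def ennreal_le_iff)
        with pt[of x] show False by simp
      qed
      then show False by simp
    qed
  qed
  then have "emeasure (?G \<Otimes>\<^sub>M ?N) Am < emeasure (?G \<Otimes>\<^sub>M ?N) Ap"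
    by (simp add: N.emeasure_pair_measure_alt[OF Am_sets] N.emeasure_pair_measure_alt[OF Ap_sets])
  then have "measure (?G \<Otimes>\<^sub>M ?N) Am < measure (?G \<Otimes>\<^sub>M ?N) Ap"
    by (simp add: PS.emeasure_eq_measure ennreal_less_iff)
  then show ?thesis
    unfolding S_plus_def S_minus_def param_noise_def Ap_def Am_def .
qed



theorem lemmaD3:
  fixes alpha sp sm sP b :: real and w :: "real ^ 'n"
  assumes "0 < alpha" "alpha < 1"
    and "0 < sp" "0 < sm" "0 < sP"
    and "sp > sm"
    and "alpha * sm / ((1 - alpha) * sp) > 1"
    and "\<forall>w' b'. risk alpha sp sm w b \<le> risk alpha sp sm (w' :: real ^ 'n) b'"
  shows "S_plus sP w b > S_minus sP w b"
proof -
  note a = assms(1,2) and spos = assms(3,4,5) and sms = assms(6) and rr = assms(7) and min = assms(8)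
  define r where "r = alpha * sm / ((1 - alpha) * sp)"
  have r1: "1 < r" using rr by (simp add: r_def)
  have den: "0 < (1 - alpha) * sp" using a spos by simp
  have "(1 - alpha) * sp < alpha * sm" using rr den by (simp add: less_divide_eq)
  also have "\<dots> < alpha * sp" using a sms by simp
  finally have al: "1 - alpha < alpha" using spos by simp
  have bpos: "0 < b"
  proof (rule ccontr)
    assume "\<not> 0 < b"
    then have b0: "b \<le> 0" by simp
    show False
    proof (cases "w = 0")
      case True
      have "risk alpha sp sm w b = alpha" using True b0 spos by (simp add: risk_zero)
      moreover have "risk alpha sp sm (0 :: real^'n) 1 = 1 - alpha" using spos by (simp add: risk_zero)
      ultimately show False using min al by (metis not_le)
    next
      case False
      define s1 where "s1 = w \<bullet> ones"
      define u where "u = norm w"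
      have u: "0 < u" using False by (simp add: u_def)
      have Rw: "risk alpha sp sm w b' = alpha * (1 - TT s1 (sp * u) (- b')) + (1 - alpha) * TT (- s1) (sm * u) (- b')" for b'
        unfolding s1_def u_def by (rule risk_repr) (use spos False in auto)
      show False
      proof (cases "s1 < 0")
        case True
        have Rmw: "risk alpha sp sm (- w) b = alpha * (1 - TT (- s1) (sp * u) (- b)) + (1 - alpha) * TT s1 (sm * u) (- b)"
          using risk_repr[of sp sm "- w" alpha b] spos False by (simp add: s1_def u_def)
        have t1: "TT s1 (sp * u) (- b) < TT (- s1) (sp * u) (- b)"
          unfolding TT_def by (rule NN_tail_mean_strict) (use spos u True in auto)
        have t2: "TT s1 (sm * u) (- b) < TT (- s1) (sm * u) (- b)"
          unfolding TT_def by (rule NN_tail_mean_strict) (use spos u True in auto)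
        have "alpha * TT s1 (sp * u) (- b) < alpha * TT (- s1) (sp * u) (- b)"
          using t1 a by simp
        moreover have "(1 - alpha) * TT s1 (sm * u) (- b) < (1 - alpha) * TT (- s1) (sm * u) (- b)"
          using t2 a by simp
        ultimately have "risk alpha sp sm (- w) b < risk alpha sp sm w b"
          unfolding Rmw Rw by (simp add: algebra_simps)
        then show False using min by (metis not_le)
      next
        case False
        then have s1: "0 \<le> s1" by simp
        define d where "d = ln r * sp\<^sup>2 * u\<^sup>2 / (4 * (s1 + 1))"
        have dpos: "0 < d" unfolding d_def using r1 spos u s1 by (intro divide_pos_pos mult_pos_pos) auto
        have cd: "- d < - b" using dpos b0 by simp
        have split1: "TT s1 (sp * u) (- d) = TT s1 (sp * u) (- b) + measure (NN s1 (sp * u)) {- d<..- b}"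
          unfolding TT_def by (rule NN_tail_split) (use spos u cd in auto)
        have split2: "TT (- s1) (sm * u) (- d) = TT (- s1) (sm * u) (- b) + measure (NN (- s1) (sm * u)) {- d<..- b}"
          unfolding TT_def by (rule NN_tail_split) (use spos u cd in auto)
        have cmp: "(1 - alpha) * measure (NN (- s1) (sm * u)) {- d<..- b} < alpha * measure (NN s1 (sp * u)) {- d<..- b}"
        proof (rule NN_compare)
          fix y assume "- d < y" "y \<le> - b"
          then show "(1 - alpha) * normal_density (- s1) (sm * u) y < alpha * normal_density s1 (sp * u) y"
            by (intro pointwise_bound[OF a spos(2) sms u s1 r1 r_def]) (simp add: d_def)
        qed (use spos u a cd in auto)
        have "risk alpha sp sm w d < risk alpha sp sm w b"
          unfolding Rw split1 split2 using cmp by (simp add: algebra_simps)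
        then show False using min by (metis not_le)
      qed
    qed
  qed
  show ?thesis by (rule S_compare[OF spos(3) bpos])
qed

end
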